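(* Let $\mathbf X=(X_1,\dots,X_k)$, $2\le k\le n-1$, be homogeneous coordinates of proper cycles and $S$ a vector with $(S\mid S)\le0$, with $X_1,\dots,X_k,S$ linearly independent and $\Delta(\mathbf X,S)<0$. Let $y$ be a proper cycle with $y\notin\langle\mathbf x,s\rangle$ and $(Y\mid S)\ne0$. Define $h(x)=\Delta(X,Y,S)/(\Delta(X,S)\Delta(Y,S))$ on the open set of $x\in\langle\mathbf x,s\rangle$ with $\Delta(X,S)\neq0$. Let $p=P_{\langle\mathbf x,s\rangle}(y)$ (coordinates $P_{\langle\mathbf X,S\rangle}Y$) and assume $p\neq s$. Then $h$ is defined at $p$, $h(p)=\delta(\mathbf x,y,s)$, and $p$ is a critical point of $h$. If moreover $(S\mid S)<0$, then there is a cycle $x_0\in\langle\mathbf x,s\rangle\cap\langle s\rangle^\perp$, $x_0\neq s$, with $(X_0\mid Y)=0$; every such $x_0$ is a critical point of $h$ and $h(x_0)=1/(S\mid S)$.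
   Context: Let $n\ge 3$. For $X=(\xi_0,\boldsymbol\xi_1,\xi_2,\xi_3)$ and $Y=(\eta_0,\boldsymbol\eta_1,\eta_2,\eta_3)$ in $\mathbb{R}^{n+3}=\mathbb{R}\times\mathbb{R}^n\times\mathbb{R}\times\mathbb{R}$, the Lie product is the nondegenerate symmetric bilinear form $(X\mid Y)=\xi_0\eta_2+\boldsymbol\xi_1\cdot\boldsymbol\eta_1+\xi_2\eta_0-\xi_3\eta_3$. Points of $\mathbb{P}^{n+2}$ are cycles; lowercase letters denote cycles and uppercase letters their homogeneous coordinate vectors; a cycle is proper if $(X\mid X)=0$. For a list $\mathbf X$, $\langle\mathbf X\rangle$ is its span, $\langle\mathbf x\rangle$ the projective subspace, $\langle s\rangle^\perp$ the projectivization of $\{Z:(Z\mid S)=0\}$, and $\Delta(\mathbf X)=\det[(X_i\mid X_j)]$. $P_{\langle\mathbf X,S\rangle}$ is the Lie orthogonal projection onto $\langle\mathbf X,S\rangle$ along $\langle\mathbf X,S\rangle^\perp$, and $P_{\langle\mathbf x,s\rangle}$ the induced projective map. The discriminant is $\delta(\mathbf x,y,s)=\Delta(\mathbf X,Y,S)/(\Delta(\mathbf X,S)\Delta(Y,S))$. *)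

theory Defs
  imports Complex_Main "Jordan_Normal_Form.Determinant"
begin

text \<open>Vectors of R^(n+3) are represented as functions nat => real that vanish
 from index n+3 on. Coordinates: index 0 = xi_0, indices 1..n = xi_1 (bold),
 index n+1 = xi_2, index n+2 = xi_3.\<close>

definition is_vec :: "nat \<Rightarrow> (nat \<Rightarrow> real) \<Rightarrow> bool" where
  "is_vec n X \<longleftrightarrow> (\<forall>i\<ge>n+3. X i = 0)"

definition lie :: "nat \<Rightarrow> (nat \<Rightarrow> real) \<Rightarrow> (nat \<Rightarrow> real) \<Rightarrow> real" where
  "lie n X Y = X 0 * Y (n+1) + (\<Sum>i\<in>{1..n}. X i * Y i) + X (n+1) * Y 0 - X (n+2) * Y (n+2)"

definition lin_comb :: "(nat \<Rightarrow> real) \<Rightarrow> (nat \<Rightarrow> real) list \<Rightarrow> (nat \<Rightarrow> real)" where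
  "lin_comb c Ws = (\<lambda>i. \<Sum>j<length Ws. c j * (Ws!j) i)"

definition lin_indep :: "(nat \<Rightarrow> real) list \<Rightarrow> bool" where
  "lin_indep Ws \<longleftrightarrow> (\<forall>c. lin_comb c Ws = (\<lambda>_. 0) \<longrightarrow> (\<forall>j<length Ws. c j = 0))"

definition span_set :: "(nat \<Rightarrow> real) list \<Rightarrow> (nat \<Rightarrow> real) set" where
  "span_set Ws = {lin_comb c Ws | c. True}"

definition gram_det :: "nat \<Rightarrow> (nat \<Rightarrow> real) list \<Rightarrow> real" where
  "gram_det n Ws = det (mat (length Ws) (length Ws) (\<lambda>(i,j). lie n (Ws!i) (Ws!j)))"

definition lie_proj :: "nat \<Rightarrow> (nat \<Rightarrow> real) list \<Rightarrow> (nat \<Rightarrow> real) \<Rightarrow> (nat \<Rightarrow> real)" where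
  "lie_proj n Ws Y = (THE Z. Z \<in> span_set Ws \<and> (\<forall>W\<in>set Ws. lie n (\<lambda>i. Y i - Z i) W = 0))"

definition hfun :: "nat \<Rightarrow> (nat \<Rightarrow> real) \<Rightarrow> (nat \<Rightarrow> real) \<Rightarrow> (nat \<Rightarrow> real) \<Rightarrow> real" where
  "hfun n Y S Z = gram_det n [Z, Y, S] / (gram_det n [Z, S] * gram_det n [Y, S])"

definition discr :: "nat \<Rightarrow> (nat \<Rightarrow> real) list \<Rightarrow> (nat \<Rightarrow> real) \<Rightarrow> (nat \<Rightarrow> real) \<Rightarrow> real" where
  "discr n Xs Y S = gram_det n (Xs @ [Y, S]) / (gram_det n (Xs @ [S]) * gram_det n [Y, S])"

text \<open>Critical point of f (a degree-0 homogeneous function of the coordinate vector)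
 on the projective subspace spanned by Ws: all directional derivatives along
 directions in span Ws vanish at P.\<close>
definition critical_on :: "(nat \<Rightarrow> real) list \<Rightarrow> ((nat \<Rightarrow> real) \<Rightarrow> real) \<Rightarrow> (nat \<Rightarrow> real) \<Rightarrow> bool" where
  "critical_on Ws f P \<longleftrightarrow>
     (\<forall>V\<in>span_set Ws. ((\<lambda>t. f (\<lambda>i. P i + t * V i)) has_real_derivative 0) (at 0))"

end

theory Submission
  imports Defs
begin

lemma det2: "det (mat 2 2 f) = f(0,0)*f(1,1) - f(0,1)*f(1,0)"
  apply (subst laplace_expansion_row[of _ 2 0])
    apply auto
  apply (simp add: cofactor_def mat_delete_def numeral_2_eq_2 lessThan_Suc det_single)
  done
lemma det2': "det (mat (Suc (Suc 0)) (Suc (Suc 0)) f) = f(0,0)*f(1,1) - f(0,1)*f(1,0)"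
  using det2 by (simp add: numeral_2_eq_2)
lemma det3: "det (mat 3 3 f) = f(0,0)*(f(1,1)*f(2,2) - f(1,2)*f(2,1))
   - f(0,1)*(f(1,0)*f(2,2) - f(1,2)*f(2,0)) + f(0,2)*(f(1,0)*f(2,1)-f(1,1)*f(2,0))"
  apply (subst laplace_expansion_row[of _ 3 0])
    apply auto
  apply (simp add: cofactor_def mat_delete_def numeral_3_eq_3 lessThan_Suc det2')
  apply (simp add: numeral_2_eq_2 algebra_simps)
  done

lemma lie_sym: "lie n X Y = lie n Y X"
  unfolding lie_def by (simp add: mult.commute)
lemma lie_add_left: "lie n (\<lambda>i. X i + Z i) W = lie n X W + lie n Z W"
  unfolding lie_def by (simp add: algebra_simps sum.distrib)
lemma lie_scale_left: "lie n (\<lambda>i. a * X i) W = a * lie n X W"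
  unfolding lie_def by (simp add: algebra_simps sum_distrib_left)
lemma lie_diff_left: "lie n (\<lambda>i. X i - Z i) W = lie n X W - lie n Z W"
  unfolding lie_def by (simp add: algebra_simps sum_subtractf)
lemma lie_sum_left: "lie n (\<lambda>i. \<Sum>j\<in>A. f j i) W = (\<Sum>j\<in>A. lie n (f j) W)"
  unfolding lie_def by (simp add: algebra_simps sum.distrib sum_distrib_left sum_distrib_right sum_subtractf sum.swap[of _ A])
lemma lie_lc_left: "lie n (lin_comb c Ws) W = (\<Sum>j<length Ws. c j * lie n (Ws!j) W)"
  unfolding lin_comb_def by (simp add: lie_sum_left lie_scale_left)
lemma lie_lc_right: "lie n W (lin_comb c Ws) = (\<Sum>j<length Ws. c j * lie n W (Ws!j))"
proof -
  have "lie n W (lin_comb c Ws) = lie n (lin_comb c Ws) W" by (rule lie_sym)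
  also have "\<dots> = (\<Sum>j<length Ws. c j * lie n (Ws!j) W)" by (rule lie_lc_left)
  finally show ?thesis by (simp add: lie_sym)
qed


definition gmat :: "nat \<Rightarrow> (nat \<Rightarrow> real) list \<Rightarrow> real mat" where
  "gmat n Ws = mat (length Ws) (length Ws) (\<lambda>(i,j). lie n (Ws!i) (Ws!j))"

lemma gram_det_gmat: "gram_det n Ws = det (gmat n Ws)"
  unfolding gram_det_def gmat_def by simp

lemma gram_change:
  assumes lO: "length Os = m" and lB: "length Bs = m"
    and C: "\<forall>i<m. Os!i = lin_comb (C i) Bs"
  shows "gram_det n Os = det (mat m m (\<lambda>(i,j). C i j))^2 * gram_det n Bs"
proof -
  let ?M = "mat m m (\<lambda>(i,j). C i j)"
  let ?G = "gmat n Bs"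
  have Mc: "?M \<in> carrier_mat m m" by simp
  have Gc: "?G \<in> carrier_mat m m" using lB by (simp add: gmat_def)
  have eq: "gmat n Os = ?M * ?G * ?M\<^sup>T"
  proof (rule eq_matI)
    fix i j assume i: "i < dim_row (?M * ?G * ?M\<^sup>T)" and j: "j < dim_col (?M * ?G * ?M\<^sup>T)"
    hence i': "i < m" and j': "j < m" by auto
    have "gmat n Os $$ (i,j) = lie n (lin_comb (C i) Bs) (lin_comb (C j) Bs)"
      using i' j' lO C by (simp add: gmat_def)
    also have "\<dots> = (\<Sum>a<m. C i a * (\<Sum>b<m. C j b * lie n (Bs!a) (Bs!b)))"
      apply (simp add: lie_lc_left lie_lc_right lB sum_distrib_left)
      apply (subst sum.swap)
      apply (simp add: mult.left_commute)
      done
    also have "\<dots> = (\<Sum>b<m. (\<Sum>a<m. C i a * lie n (Bs!a) (Bs!b)) * C j b)"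
      apply (simp add: sum_distrib_left sum_distrib_right)
      apply (subst sum.swap)
      apply (simp add: mult.left_commute mult.commute)
      done
    also have "\<dots> = (?M * ?G * ?M\<^sup>T) $$ (i,j)"
      using i' j' lB by (simp add: gmat_def scalar_prod_def atLeast0LessThan)
    finally show "gmat n Os $$ (i,j) = (?M * ?G * ?M\<^sup>T) $$ (i,j)" .
  qed (use lO in \<open>auto simp: gmat_def\<close>)
  have "det (?M * ?G * ?M\<^sup>T) = det ?M * det ?G * det (?M\<^sup>T)"
    by (metis Gc Mc det_mult mult_carrier_mat transpose_carrier_mat)
  also have "\<dots> = det ?M ^2 * det ?G"
    using det_transpose[OF Mc] by (simp add: power2_eq_square)
  finally show ?thesis using eq by (simp add: gram_det_gmat)
qed



lemma gram_ortho:
  assumes k: "k < length Ws"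
    and orth: "\<forall>j<length Ws. j \<noteq> k \<longrightarrow> lie n (Ws!k) (Ws!j) = 0"
  shows "gram_det n Ws = lie n (Ws!k) (Ws!k) * gram_det n (take k Ws @ drop (Suc k) Ws)"
proof -
  let ?m = "length Ws"
  let ?A = "gmat n Ws"
  have Ac: "?A \<in> carrier_mat ?m ?m" by (simp add: gmat_def)
  have "det ?A = (\<Sum>j<?m. ?A $$ (k,j) * cofactor ?A k j)"
    by (rule laplace_expansion_row[OF Ac k])
  also have "\<dots> = ?A $$ (k,k) * cofactor ?A k k + (\<Sum>j\<in>{..<?m}-{k}. ?A $$ (k,j) * cofactor ?A k j)"
    by (rule sum.remove, auto simp: k)
  also have "(\<Sum>j\<in>{..<?m}-{k}. ?A $$ (k,j) * cofactor ?A k j) = 0"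
    by (rule sum.neutral, use orth k in \<open>auto simp: gmat_def\<close>)
  also have "cofactor ?A k k = det (mat_delete ?A k k)"
    by (simp add: cofactor_def)
  also have "mat_delete ?A k k = gmat n (take k Ws @ drop (Suc k) Ws)"
    by (rule eq_matI, use k in \<open>auto simp: mat_delete_def gmat_def nth_append min_def\<close>)
  finally show ?thesis using k by (simp add: gram_det_gmat gmat_def)
qed



lemma three_two:
  fixes a0 a1 a2 b0 b1 b2 :: real
  shows "\<exists>x y z. \<not>(x = 0 \<and> y = 0 \<and> z = 0) \<and> a0*x + a1*y + a2*z = 0 \<and> b0*x + b1*y + b2*z = 0"
proof -
  define c0 c1 c2 where "c0 = a1*b2 - a2*b1" and "c1 = a2*b0 - a0*b2" and "c2 = a0*b1 - a1*b0"
  show ?thesis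
  proof (cases "c0 = 0 \<and> c1 = 0 \<and> c2 = 0")
    case False
    show ?thesis
      by (rule exI[of _ c0], rule exI[of _ c1], rule exI[of _ c2])
        (use False in \<open>auto simp: c0_def c1_def c2_def algebra_simps\<close>)
  next
    case True
    hence t: "a1*b2 = a2*b1" "a2*b0 = a0*b2" "a0*b1 = a1*b0" by (auto simp: c0_def c1_def c2_def)
    show ?thesis
    proof (cases "a0 = 0 \<and> a1 = 0 \<and> a2 = 0")
      case a: True
      show ?thesis
      proof (cases "b0 = 0 \<and> b1 = 0")
        case True thus ?thesis using a by (intro exI[of _ 1] exI[of _ 0]) auto
      next
        case False thus ?thesis using a
          by (intro exI[of _ b1] exI[of _ "-b0"] exI[of _ 0]) (auto simp: algebra_simps)
      qed
    next
      case False
      then consider "a0 \<noteq> 0" | "a1 \<noteq> 0" | "a2 \<noteq> 0" by blast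
      thus ?thesis
      proof cases
        case 1 thus ?thesis using t
          by (intro exI[of _ a1] exI[of _ "-a0"] exI[of _ 0]) (auto simp: algebra_simps)
      next
        case 2 thus ?thesis using t
          by (intro exI[of _ a1] exI[of _ "-a0"] exI[of _ 0]) (auto simp: algebra_simps)
      next
        case 3 thus ?thesis using t
          by (intro exI[of _ a2] exI[of _ 0] exI[of _ "-a0"]) (auto simp: algebra_simps)
      qed
    qed
  qed
qed

lemma lie_self_decomp:
  "lie n X X + (X 0 - X (n+1))^2/2 + (X (n+2))^2 = (X 0 + X (n+1))^2/2 + (\<Sum>i\<in>{1..n}. (X i)^2)"
  unfolding lie_def by (simp add: power2_eq_square field_simps)

lemma lie_zero_coords:
  assumes "\<forall>i\<le>n+2. W i = 0" shows "lie n W X = 0"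
  using assms unfolding lie_def by simp

lemma pos_lemma:
  assumes s: "lie n S S < 0" and t: "lie n T T < 0" and st: "lie n S T = 0"
    and ws: "lie n W S = 0" and wt: "lie n W T = 0"
  shows "lie n W W \<ge> 0 \<and> (lie n W W = 0 \<longrightarrow> (\<forall>X. lie n W X = 0))"
proof -
  let ?a = "\<lambda>X::nat\<Rightarrow>real. X 0 - X (n+1)" and ?b = "\<lambda>X::nat\<Rightarrow>real. X (n+2)"
  obtain x y z :: real where nz: "\<not>(x = 0 \<and> y = 0 \<and> z = 0)"
    and ea: "?a S * x + ?a T * y + ?a W * z = 0" and eb: "?b S * x + ?b T * y + ?b W * z = 0"
    using three_two by blast
  define Z where "Z = (\<lambda>i. x * S i + y * T i + z * W i)"
  have aZ: "?a Z = 0" using ea unfolding Z_def by (simp add: algebra_simps)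
  have bZ: "?b Z = 0" using eb unfolding Z_def by (simp add: algebra_simps)
  have Zpos: "lie n Z Z \<ge> 0"
  proof -
    have "0 \<le> (Z 0 + Z (n+1))^2/2 + (\<Sum>i\<in>{1..n}. (Z i)^2)"
      by (intro add_nonneg_nonneg sum_nonneg) auto
    thus ?thesis using lie_self_decomp[of n Z] aZ bZ by simp
  qed
  have ts: "lie n T S = 0" using st lie_sym by metis
  have sw: "lie n S W = 0" "lie n T W = 0" using ws wt lie_sym by metis+
  have ZZ: "lie n Z Z = x^2 * lie n S S + y^2 * lie n T T + z^2 * lie n W W"
    unfolding Z_def
    by (simp add: lie_add_left lie_scale_left lie_lc_right, subst (1 2 3) lie_sym,
        simp add: lie_add_left lie_scale_left st ts ws wt sw power2_eq_square algebra_simps)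
  show ?thesis
  proof (intro conjI impI allI)
    show "lie n W W \<ge> 0"
    proof (rule ccontr)
      assume "\<not> lie n W W \<ge> 0"
      hence w: "lie n W W < 0" by simp
      have "x^2 * lie n S S \<le> 0" "y^2 * lie n T T \<le> 0" "z^2 * lie n W W \<le> 0"
        using s t w by (simp_all add: mult_nonneg_nonpos)
      hence "x^2 * lie n S S = 0" "y^2 * lie n T T = 0" "z^2 * lie n W W = 0"
        using Zpos ZZ by linarith+
      thus False using nz s t w by simp
    qed
  next
    fix X assume w: "lie n W W = 0"
    have "x^2 * lie n S S \<le> 0" "y^2 * lie n T T \<le> 0"
      using s t by (simp_all add: mult_nonneg_nonpos)
    moreover have "lie n Z Z = x^2 * lie n S S + y^2 * lie n T T" using ZZ w by simp
    ultimately have "x^2 * lie n S S = 0" "y^2 * lie n T T = 0"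
      using Zpos by linarith+
    hence xy: "x = 0" "y = 0" using s t by simp_all
    hence z: "z \<noteq> 0" using nz by simp
    have aW: "?a W = 0" using ea xy z by simp
    have bW: "?b W = 0" using eb xy z by simp
    have e: "(W 0 + W (n+1))^2/2 + (\<Sum>i\<in>{1..n}. (W i)^2) = 0"
      using lie_self_decomp[of n W] w aW bW by simp
    have h1: "(W 0 + W (n+1))^2/2 = 0" and h2: "(\<Sum>i\<in>{1..n}. (W i)^2) = 0"
      using e by (smt (verit) sum_nonneg zero_le_power2 divide_nonneg_pos)+
    have "\<forall>i\<in>{1..n}. (W i)^2 = 0" using h2 by (subst (asm) sum_nonneg_eq_0_iff) auto
    moreover have "W 0 = 0" "W (n+1) = 0" using h1 aW by auto
    ultimately have "\<forall>i\<le>n+2. W i = 0" using bW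
      by (metis (no_types, lifting) Suc_eq_plus1 add_2_eq_Suc' atLeastAtMost_iff le_Suc_eq less_one not_le numeral_1_eq_Suc_0 numerals(1) power_zero_numeral zero_eq_power2)
    thus "lie n W X = 0" by (rule lie_zero_coords)
  qed
qed



lemma span_in: "j < length B \<Longrightarrow> B!j \<in> span_set B"
proof -
  assume j: "j < length B"
  have "lin_comb (\<lambda>l. if l = j then 1 else 0) B = B!j"
  proof (rule ext)
    fix i
    have "lin_comb (\<lambda>l. if l = j then 1 else 0) B i = (\<Sum>l<length B. if l = j then (B!l) i else 0)"
      unfolding lin_comb_def by (rule sum.cong) auto
    also have "\<dots> = (B!j) i" using j by simp
    finally show "lin_comb (\<lambda>l. if l = j then 1 else 0) B i = (B!j) i" .
  qed
  thus ?thesis unfolding span_set_def by (metis (mono_tags, lifting) mem_Collect_eq)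
qed

lemma span_in': "x \<in> set B \<Longrightarrow> x \<in> span_set B"
  by (metis in_set_conv_nth span_in)

lemma span_zero: "(\<lambda>_. 0) \<in> span_set B"
proof -
  have "lin_comb (\<lambda>_. 0) B = (\<lambda>_. 0)" unfolding lin_comb_def by simp
  thus ?thesis unfolding span_set_def by (metis (mono_tags, lifting) mem_Collect_eq)
qed

lemma span_add: "X \<in> span_set B \<Longrightarrow> Z \<in> span_set B \<Longrightarrow> (\<lambda>i. X i + Z i) \<in> span_set B"
proof -
  assume "X \<in> span_set B" "Z \<in> span_set B"
  then obtain c d where "X = lin_comb c B" "Z = lin_comb d B" unfolding span_set_def by blast
  hence "(\<lambda>i. X i + Z i) = lin_comb (\<lambda>j. c j + d j) B"
    unfolding lin_comb_def by (simp add: algebra_simps sum.distrib)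
  thus ?thesis unfolding span_set_def by blast
qed

lemma span_scale: "X \<in> span_set B \<Longrightarrow> (\<lambda>i. a * X i) \<in> span_set B"
proof -
  assume "X \<in> span_set B"
  then obtain c where "X = lin_comb c B" unfolding span_set_def by blast
  hence "(\<lambda>i. a * X i) = lin_comb (\<lambda>j. a * c j) B"
    unfolding lin_comb_def by (simp add: algebra_simps sum_distrib_left)
  thus ?thesis unfolding span_set_def by blast
qed

lemma span_diff: "X \<in> span_set B \<Longrightarrow> Z \<in> span_set B \<Longrightarrow> (\<lambda>i. X i - Z i) \<in> span_set B"
proof -
  assume a: "X \<in> span_set B" "Z \<in> span_set B"
  have "(\<lambda>i. X i + (-1) * Z i) \<in> span_set B" by (rule span_add[OF a(1) span_scale[OF a(2)]])
  thus ?thesis by simp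
qed

lemma span_sum: "finite A \<Longrightarrow> (\<forall>j\<in>A. f j \<in> span_set B) \<Longrightarrow> (\<lambda>i. \<Sum>j\<in>A. f j i) \<in> span_set B"
proof (induction A rule: finite_induct)
  case empty thus ?case using span_zero by simp
next
  case (insert x F)
  have "(\<lambda>i. f x i + (\<Sum>j\<in>F. f j i)) \<in> span_set B"
    using insert by (intro span_add) auto
  thus ?case using insert by simp
qed

lemma span_lc: "(\<forall>j<length Ws. Ws!j \<in> span_set B) \<Longrightarrow> lin_comb c Ws \<in> span_set B"
  unfolding lin_comb_def by (rule span_sum) (auto intro: span_scale)

lemma gram_change_span:
  assumes "length Os = m" "length Bs = m" "\<forall>i<m. Os!i \<in> span_set Bs"
  shows "\<exists>d. gram_det n Os = d^2 * gram_det n Bs"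
proof -
  have "\<forall>i. \<exists>c. i < m \<longrightarrow> Os!i = lin_comb c Bs" using assms(3) unfolding span_set_def by blast
  then obtain C where "\<forall>i. i < m \<longrightarrow> Os!i = lin_comb (C i) Bs" by metis
  thus ?thesis using gram_change[OF assms(1,2)] by blast
qed

lemma psd:
  assumes s: "lie n S S < 0" and t: "lie n T T < 0" and st: "lie n S T = 0"
  shows "(\<forall>w\<in>set ws. lie n w S = 0 \<and> lie n w T = 0) \<Longrightarrow> gram_det n ws \<ge> 0"
proof (induction "length ws" arbitrary: ws)
  case 0 thus ?case by (simp add: gram_det_def)
next
  case (Suc m wsa)
  then obtain w ws where wsa: "wsa = w#ws" and lm: "length ws = m" by (cases wsa) auto
  have prems: "\<forall>w\<in>set (w#ws). lie n w S = 0 \<and> lie n w T = 0" using Suc.prems wsa by simp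
  have IH0: "\<And>vs. length vs = m \<Longrightarrow> (\<forall>w\<in>set vs. lie n w S = 0 \<and> lie n w T = 0) \<Longrightarrow> gram_det n vs \<ge> 0"
    using Suc.hyps(1) by blast
  show ?case
  proof -
  have wS: "lie n w S = 0" "lie n w T = 0" using prems by auto
  note pl = pos_lemma[OF s t st wS]
  show ?case
  proof (cases "lie n w w = 0")
    case True
    hence "\<forall>X. lie n w X = 0" using pl by blast
    hence "gram_det n (w#ws) = 0 * gram_det n ws"
      using gram_ortho[of 0 "w#ws" n] by simp
    thus ?thesis using wsa by simp
  next
    case False
    hence wpos: "lie n w w > 0" using pl by simp
    define pr where "pr = (\<lambda>x::nat\<Rightarrow>real. \<lambda>i. x i - (lie n x w / lie n w w) * w i)"
    define ws' where "ws' = map pr ws"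
    have prS: "lie n (pr x) S = 0" "lie n (pr x) T = 0" if "x \<in> set ws" for x
      using that prems wS unfolding pr_def by (simp_all only: lie_diff_left lie_scale_left) auto
    have IH: "gram_det n ws' \<ge> 0"
      using IH0[of ws'] prS lm unfolding ws'_def by auto
    have orth: "lie n w (pr x) = 0" for x
      unfolding pr_def using wpos
      by (subst lie_sym, simp only: lie_diff_left lie_scale_left lie_sym[of n w x]) simp
    have g1: "gram_det n (w#ws') = lie n w w * gram_det n ws'"
      using gram_ortho[of 0 "w#ws'" n] orth by (auto simp: ws'_def)
    have mem: "\<forall>i<length (w#ws). (w#ws)!i \<in> span_set (w#ws')"
    proof (intro allI impI)
      fix i assume i: "i < length (w#ws)"
      show "(w#ws)!i \<in> span_set (w#ws')"
      proof (cases i)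
        case 0 thus ?thesis using span_in[of 0 "w#ws'"] by simp
      next
        case (Suc j)
        hence j: "j < length ws" using i by simp
        have a: "pr (ws!j) \<in> span_set (w#ws')"
          using span_in[of "Suc j" "w#ws'"] j by (simp add: ws'_def)
        have b: "w \<in> span_set (w#ws')" using span_in[of 0 "w#ws'"] by simp
        have "(\<lambda>i. pr (ws!j) i + (lie n (ws!j) w / lie n w w) * w i) \<in> span_set (w#ws')"
          by (rule span_add[OF a span_scale[OF b]])
        moreover have "(\<lambda>i. pr (ws!j) i + (lie n (ws!j) w / lie n w w) * w i) = ws!j"
          unfolding pr_def by auto
        ultimately show ?thesis using Suc by simp
      qed
    qed
    obtain d where "gram_det n (w#ws) = d^2 * gram_det n (w#ws')"
      using gram_change_span[OF _ _ mem] by (auto simp: ws'_def)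
    thus ?thesis using g1 IH wpos wsa by simp
  qed
  qed
qed



lemma gmat_vec: assumes "v \<in> carrier_vec (length Ob)" "j < length Ob"
  shows "(gmat n Ob *\<^sub>v v) $ j = lie n (lin_comb (\<lambda>i. v $ i) Ob) (Ob!j)"
proof -
  have "(gmat n Ob *\<^sub>v v) $ j = (\<Sum>i<length Ob. v $ i * lie n (Ob!i) (Ob!j))"
    using assms by (auto simp: gmat_def scalar_prod_def atLeast0LessThan lie_sym[of n "Ob!j"] mult.commute intro: sum.cong)
  thus ?thesis by (simp add: lie_lc_left)
qed

lemma ND:
  assumes d: "gram_det n Ob \<noteq> 0" and Z: "Z \<in> span_set Ob"
    and orth: "\<forall>j<length Ob. lie n Z (Ob!j) = 0"
  shows "Z = (\<lambda>_. 0)"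
proof -
  let ?m = "length Ob"
  obtain c where Zc: "Z = lin_comb c Ob" using Z unfolding span_set_def by blast
  define v where "v = vec ?m c"
  have vc: "v \<in> carrier_vec ?m" by (simp add: v_def)
  have lc: "lin_comb (\<lambda>i. v $ i) Ob = Z" unfolding Zc lin_comb_def v_def by auto
  have "gmat n Ob *\<^sub>v v = 0\<^sub>v ?m"
    by (rule eq_vecI, use gmat_vec[OF vc] lc orth in \<open>auto simp: gmat_def\<close>)
  moreover have "gmat n Ob \<in> carrier_mat ?m ?m" by (simp add: gmat_def)
  ultimately have "v = 0\<^sub>v ?m" using det_0_iff_vec_prod_zero[of "gmat n Ob" ?m] d vc
    by (auto simp: gram_det_gmat)
  hence "\<forall>i<?m. c i = 0" unfolding v_def by (metis index_vec index_zero_vec(1))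
  thus ?thesis unfolding Zc lin_comb_def by auto
qed

lemma solve:
  assumes d: "gram_det n Ob \<noteq> 0"
  shows "\<exists>Z\<in>span_set Ob. \<forall>j<length Ob. lie n Z (Ob!j) = r j"
proof -
  let ?m = "length Ob" and ?G = "gmat n Ob"
  have Gc: "?G \<in> carrier_mat ?m ?m" by (simp add: gmat_def)
  define v where "v = (1 / det ?G) \<cdot>\<^sub>v (adj_mat ?G *\<^sub>v vec ?m r)"
  have vc: "v \<in> carrier_vec ?m" using adj_mat(1)[OF Gc] by (simp add: v_def)
  have "?G *\<^sub>v v = (1 / det ?G) \<cdot>\<^sub>v (?G *\<^sub>v (adj_mat ?G *\<^sub>v vec ?m r))"
    unfolding v_def using Gc adj_mat(1)[OF Gc] by (metis mult_mat_vec mult_mat_vec_carrier vec_carrier)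
  also have "?G *\<^sub>v (adj_mat ?G *\<^sub>v vec ?m r) = (?G * adj_mat ?G) *\<^sub>v vec ?m r"
    using Gc adj_mat(1)[OF Gc] by (metis assoc_mult_mat_vec vec_carrier)
  also have "\<dots> = det ?G \<cdot>\<^sub>v vec ?m r" unfolding adj_mat(2)[OF Gc]
  proof (rule eq_vecI)
    fix i assume "i < dim_vec (det ?G \<cdot>\<^sub>v vec ?m r)"
    hence i: "i < ?m" by simp
    have "(det ?G \<cdot>\<^sub>m 1\<^sub>m ?m *\<^sub>v vec ?m r) $ i = (\<Sum>k\<in>{0..<?m}. (if i = k then det ?G else 0) * r k)"
      using i by (auto simp: scalar_prod_def intro: sum.cong)
    also have "\<dots> = (\<Sum>k\<in>{0..<?m}. if i = k then det ?G * r k else 0)" by (rule sum.cong) auto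
    also have "\<dots> = det ?G * r i" using i by simp
    finally show "(det ?G \<cdot>\<^sub>m 1\<^sub>m ?m *\<^sub>v vec ?m r) $ i = (det ?G \<cdot>\<^sub>v vec ?m r) $ i" using i by simp
  qed simp
  finally have Gv: "?G *\<^sub>v v = vec ?m r" using d by (auto simp: gram_det_gmat smult_vec_def)
  have "\<forall>j<?m. lie n (lin_comb (\<lambda>i. v $ i) Ob) (Ob!j) = r j"
    using gmat_vec[OF vc] Gv by (metis index_vec)
  moreover have "lin_comb (\<lambda>i. v $ i) Ob \<in> span_set Ob" unfolding span_set_def by blast
  ultimately show ?thesis by blast
qed

lemma proj_props:
  assumes d: "gram_det n Ob \<noteq> 0"
  shows "lie_proj n Ob Y \<in> span_set Ob \<and> (\<forall>j<length Ob. lie n (lie_proj n Ob Y) (Ob!j) = lie n Y (Ob!j))"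
proof -
  let ?Q = "\<lambda>Z. Z \<in> span_set Ob \<and> (\<forall>W\<in>set Ob. lie n (\<lambda>i. Y i - Z i) W = 0)"
  have eqv: "?Q Z \<longleftrightarrow> Z \<in> span_set Ob \<and> (\<forall>j<length Ob. lie n Z (Ob!j) = lie n Y (Ob!j))" for Z
    by (simp add: lie_diff_left all_set_conv_all_nth) (auto simp: eq_commute)
  obtain Z where Z: "?Q Z" using solve[OF d, of "\<lambda>j. lie n Y (Ob!j)"] eqv by blast
  have uniq: "Z' = Z" if "?Q Z'" for Z'
  proof -
    have "(\<lambda>i. Z' i - Z i) = (\<lambda>_. 0)"
      by (rule ND[OF d], use that Z eqv in \<open>auto intro: span_diff simp: lie_diff_left\<close>)
    thus ?thesis by (intro ext) (metis eq_iff_diff_eq_0)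
  qed
  have "?Q (lie_proj n Ob Y)" unfolding lie_proj_def by (rule theI[of ?Q Z], rule Z, rule uniq)
  thus ?thesis using eqv by blast
qed



lemma in_remove: "i < length xs \<Longrightarrow> i \<noteq> j \<Longrightarrow> xs!i \<in> set (take j xs @ drop (Suc j) xs)"
proof -
  assume i: "i < length xs" and ij: "i \<noteq> j"
  show ?thesis
  proof (cases "i < j")
    case True thus ?thesis using i by (metis UnI1 in_set_conv_nth length_take min_less_iff_conj nth_take set_append)
  next
    case False
    hence "j < i" using ij by simp
    hence "drop (Suc j) xs ! (i - Suc j) = xs!i" "i - Suc j < length (drop (Suc j) xs)" using i by auto
    thus ?thesis by (metis UnI2 nth_mem set_append)
  qed
qed

lemma Lprime:
  assumes Ob: "Ob = Xs @ [S]" and s: "lie n S S < 0" and T: "T \<in> span_set Ob"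
    and tS: "lie n T S = 0" and t: "lie n T T < 0"
  shows "gram_det n Ob \<ge> 0"
proof -
  let ?m = "length Ob" and ?k = "length Xs"
  have m: "?m = Suc ?k" using Ob by simp
  obtain c where Tc: "T = lin_comb c Ob" using T unfolding span_set_def by blast
  have ObS: "Ob ! ?k = S" using Ob by simp
  have ObX: "i < ?k \<Longrightarrow> Ob ! i = Xs ! i" for i using Ob by (simp add: nth_append)
  have sT: "lie n S T = 0" using tS lie_sym by metis
  obtain j where j: "j < ?k" and cj: "c j \<noteq> 0"
  proof (rule ccontr)
    assume "\<not> thesis"
    hence z: "\<forall>j<?k. c j = 0" using that by blast
    have TS: "T = (\<lambda>i. c ?k * S i)"
    proof
      fix i
      have "T i = (\<Sum>l<Suc ?k. c l * (Ob!l) i)" using Tc m by (simp add: lin_comb_def)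
      also have "\<dots> = c ?k * S i" using z ObS by (simp add: lessThan_Suc)
      finally show "T i = c ?k * S i" .
    qed
    hence "lie n T S = c ?k * lie n S S" by (simp add: lie_scale_left)
    hence "c ?k = 0" using tS s by simp
    hence "lie n T T = 0" using TS by (simp add: lie_def)
    thus False using t by simp
  qed
  define pr where "pr = (\<lambda>x::nat\<Rightarrow>real. \<lambda>i. x i - (lie n x S / lie n S S) * S i - (lie n x T / lie n T T) * T i)"
  have prS: "lie n (pr x) S = 0" for x
    unfolding pr_def using s t by (simp only: lie_diff_left lie_scale_left tS) simp
  have prT: "lie n (pr x) T = 0" for x
    unfolding pr_def using s t by (simp only: lie_diff_left lie_scale_left sT) simp
  define Rest where "Rest = take j Xs @ drop (Suc j) Xs"
  define B where "B = S # T # map pr Rest"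
  have lB: "length B = ?m" using j m by (simp add: B_def Rest_def)
  have SB: "S \<in> span_set B" "T \<in> span_set B" using span_in[of 0 B] span_in[of 1 B] by (auto simp: B_def)
  have A: "Ob!l \<in> span_set B" if l: "l < ?m" "l \<noteq> j" for l
  proof (cases "l = ?k")
    case True thus ?thesis using ObS SB by simp
  next
    case False
    hence lk: "l < ?k" using l m by simp
    have "Xs!l \<in> set Rest" unfolding Rest_def by (rule in_remove[OF lk l(2)])
    hence "pr (Xs!l) \<in> set B" by (simp add: B_def)
    hence p: "pr (Xs!l) \<in> span_set B" by (rule span_in')
    have "(\<lambda>i. pr (Xs!l) i + (lie n (Xs!l) S / lie n S S) * S i + (lie n (Xs!l) T / lie n T T) * T i) \<in> span_set B"
      by (intro span_add span_scale p SB)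
    moreover have "(\<lambda>i. pr (Xs!l) i + (lie n (Xs!l) S / lie n S S) * S i + (lie n (Xs!l) T / lie n T T) * T i) = Xs!l"
      unfolding pr_def by auto
    ultimately show ?thesis using ObX[OF lk] by simp
  qed
  have Aj: "Ob!j \<in> span_set B"
  proof -
    have jm: "j < ?m" using j m by simp
    have sp: "(\<lambda>i. \<Sum>l\<in>{..<?m}-{j}. c l * (Ob!l) i) \<in> span_set B"
      by (rule span_sum) (auto intro!: span_scale A)
    have "(\<lambda>i. (1 / c j) * (T i - (\<Sum>l\<in>{..<?m}-{j}. c l * (Ob!l) i))) \<in> span_set B"
      by (intro span_scale span_diff SB sp)
    moreover have "(\<lambda>i. (1 / c j) * (T i - (\<Sum>l\<in>{..<?m}-{j}. c l * (Ob!l) i))) = Ob!j"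
    proof
      fix i
      have "T i = c j * (Ob!j) i + (\<Sum>l\<in>{..<?m}-{j}. c l * (Ob!l) i)"
        unfolding Tc lin_comb_def by (rule sum.remove) (use jm in auto)
      thus "(1 / c j) * (T i - (\<Sum>l\<in>{..<?m}-{j}. c l * (Ob!l) i)) = (Ob!j) i" using cj by simp
    qed
    ultimately show ?thesis by simp
  qed
  have mem: "\<forall>i<?m. Ob!i \<in> span_set B" using A Aj by blast
  obtain d where gd: "gram_det n Ob = d^2 * gram_det n B"
    using gram_change_span[OF refl lB mem] by blast
  have prS': "lie n S (pr x) = 0" and prT': "lie n T (pr x) = 0" for x
    using prS[of x] prT[of x] lie_sym by metis+
  have g1: "gram_det n B = lie n S S * gram_det n (T # map pr Rest)"
    using gram_ortho[of 0 B n] unfolding B_def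
    by (auto simp: nth_Cons' sT prS' split: if_splits)
  have g2: "gram_det n (T # map pr Rest) = lie n T T * gram_det n (map pr Rest)"
    using gram_ortho[of 0 "T # map pr Rest" n]
    by (auto simp: nth_Cons' prT' split: if_splits)
  have g3: "gram_det n (map pr Rest) \<ge> 0"
    by (rule psd[OF s t sT]) (auto simp: prS prT)
  have "lie n S S * lie n T T \<ge> 0" using s t by (simp add: mult_nonpos_nonpos)
  hence "gram_det n B \<ge> 0" using g1 g2 g3
    by (metis mult.assoc mult_nonneg_nonneg)
  thus ?thesis using gd by simp
qed



lemma Llemma:
  assumes Ob: "Ob = Xs @ [S]" and neg: "gram_det n Ob < 0" and s: "lie n S S < 0"
    and Z: "Z \<in> span_set Ob" and zS: "lie n Z S = 0" and zz: "lie n Z Z \<le> 0"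
  shows "Z = (\<lambda>_. 0)"
proof (cases "lie n Z Z < 0")
  case True
  thus ?thesis using Lprime[OF Ob s Z zS] neg by simp
next
  case False
  hence z0: "lie n Z Z = 0" using zz by simp
  show ?thesis
  proof (rule ccontr)
    assume nz: "Z \<noteq> (\<lambda>_. 0)"
    obtain j where j: "j < length Ob" and zj: "lie n Z (Ob!j) \<noteq> 0"
      using ND[OF _ Z] neg nz by force
    define U where "U = Ob!j"
    have U: "U \<in> span_set Ob" unfolding U_def by (rule span_in[OF j])
    have Sin: "S \<in> span_set Ob" using span_in'[of S Ob] Ob by simp
    define U' where "U' = (\<lambda>i. U i - (lie n U S / lie n S S) * S i)"
    have U'sp: "U' \<in> span_set Ob" unfolding U'_def by (intro span_diff span_scale U Sin)
    have sZ: "lie n S Z = 0" using zS lie_sym by metis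
    have U'S: "lie n U' S = 0" unfolding U'_def using s by (simp only: lie_diff_left lie_scale_left) simp
    have U'Z: "lie n U' Z = lie n U Z" unfolding U'_def by (simp only: lie_diff_left lie_scale_left sZ mult_zero_right diff_zero)
    have UZ: "lie n U Z \<noteq> 0" using zj lie_sym unfolding U_def by metis
    define lam where "lam = - (lie n U' U' + 1) / (2 * lie n U' Z)"
    define T where "T = (\<lambda>i. U' i + lam * Z i)"
    have Tsp: "T \<in> span_set Ob" unfolding T_def by (intro span_add span_scale U'sp Z)
    have TS: "lie n T S = 0" unfolding T_def by (simp only: lie_add_left lie_scale_left U'S zS mult_zero_right add_0)
    have ZU': "lie n Z U' = lie n U' Z" by (rule lie_sym)
    have "lie n T T = lie n U' U' + 2 * lam * lie n U' Z + lam^2 * lie n Z Z"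
      unfolding T_def
      apply (simp only: lie_add_left lie_scale_left)
      apply (subst (1 2) lie_sym)
      apply (simp only: lie_add_left lie_scale_left ZU')
      apply (simp add: power2_eq_square algebra_simps)
      done
    also have "\<dots> = -1" using U'Z UZ z0 unfolding lam_def by (simp add: field_simps)
    finally have "lie n T T < 0" by simp
    thus False using Lprime[OF Ob s Tsp TS] neg by simp
  qed
qed



lemma schur:
  assumes P: "P \<in> span_set (Xs @ [S])"
    and orth: "\<forall>j<length (Xs @ [S]). lie n P ((Xs @ [S])!j) = lie n Y ((Xs @ [S])!j)"
  shows "gram_det n (Xs @ [Y, S]) = lie n (\<lambda>i. Y i - P i) (\<lambda>i. Y i - P i) * gram_det n (Xs @ [S])"
proof -
  let ?k = "length Xs" and ?Q = "\<lambda>i. Y i - P i"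
  let ?m = "Suc (Suc ?k)"
  obtain c where Pc: "P = lin_comb c (Xs @ [S])" using P unfolding span_set_def by blast
  define C where "C = (\<lambda>i. if i = ?k then (\<lambda>j. if j = ?k then 1 else if j < ?k then c j else if j = Suc ?k then c ?k else 0)
                           else (\<lambda>j. if j = i then (1::real) else 0))"
  let ?Os = "Xs @ [Y, S]" and ?Bs = "Xs @ [?Q, S]"
  have lO: "length ?Os = ?m" and lB: "length ?Bs = ?m" by simp_all
  have rep: "\<forall>i<?m. ?Os!i = lin_comb (C i) ?Bs"
  proof (intro allI impI)
    fix i assume i: "i < ?m"
    show "?Os!i = lin_comb (C i) ?Bs"
    proof (cases "i = ?k")
      case True
      show ?thesis
      proof
        fix x
        have Ci: "C i = (\<lambda>j. if j = ?k then 1 else if j < ?k then c j else if j = Suc ?k then c ?k else 0)"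
          unfolding C_def using True by simp
        have s1: "(\<Sum>j<?k. C i j * (?Bs!j) x) = (\<Sum>j<?k. c j * (Xs!j) x)"
          by (rule sum.cong) (auto simp: Ci nth_append)
        have "lin_comb (C i) ?Bs x = (\<Sum>j<Suc (Suc ?k). C i j * (?Bs!j) x)" by (simp add: lin_comb_def)
        also have "\<dots> = (\<Sum>j<?k. C i j * (?Bs!j) x) + C i ?k * (?Bs!?k) x + C i (Suc ?k) * (?Bs!Suc ?k) x"
          by (simp only: sum.lessThan_Suc)
        also have "\<dots> = (\<Sum>j<?k. c j * (Xs!j) x) + ?Q x + c ?k * S x"
          unfolding s1 by (simp add: Ci nth_append)
        finally have "lin_comb (C i) ?Bs x = (\<Sum>j<?k. c j * (Xs!j) x) + ?Q x + c ?k * S x" .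
        moreover have "P x = (\<Sum>j<?k. c j * (Xs!j) x) + c ?k * S x"
          unfolding Pc lin_comb_def by (simp add: nth_append)
        ultimately show "(?Os!i) x = lin_comb (C i) ?Bs x" using True by (simp add: nth_append)
      qed
    next
      case False
      show ?thesis
      proof
        fix x
        have "lin_comb (C i) ?Bs x = (\<Sum>j<?m. if j = i then (?Bs!j) x else 0)"
        proof -
          have Ci: "C i = (\<lambda>j. if j = i then 1 else 0)" unfolding C_def using False by simp
          show ?thesis unfolding lin_comb_def Ci length_append by (rule sum.cong) auto
        qed
        also have "\<dots> = (?Bs!i) x" using i by simp
        also have "\<dots> = (?Os!i) x" using False i by (auto simp: nth_append nth_Cons' less_Suc_eq)
        finally show "(?Os!i) x = lin_comb (C i) ?Bs x" by simp
      qed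
    qed
  qed
  let ?M = "mat ?m ?m (\<lambda>(i,j). C i j)"
  have Mc: "?M \<in> carrier_mat ?m ?m" by simp
  have "det ?M = (\<Sum>i<?m. ?M $$ (i,?k) * cofactor ?M i ?k)"
    by (rule laplace_expansion_column[OF Mc]) simp
  also have "\<dots> = ?M $$ (?k,?k) * cofactor ?M ?k ?k + (\<Sum>i\<in>{..<?m}-{?k}. ?M $$ (i,?k) * cofactor ?M i ?k)"
    by (rule sum.remove) auto
  also have "(\<Sum>i\<in>{..<?m}-{?k}. ?M $$ (i,?k) * cofactor ?M i ?k) = 0"
    by (rule sum.neutral) (auto simp: C_def)
  also have "cofactor ?M ?k ?k = det (mat_delete ?M ?k ?k)" by (simp add: cofactor_def)
  also have "mat_delete ?M ?k ?k = 1\<^sub>m (Suc ?k)"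
    by (rule eq_matI) (auto simp: mat_delete_def C_def)
  finally have detM: "det ?M = 1" by (simp add: C_def)
  have g: "gram_det n ?Os = gram_det n ?Bs"
    using gram_change[OF lO lB rep] detM by simp
  have oQ: "\<forall>j<length ?Bs. j \<noteq> ?k \<longrightarrow> lie n (?Bs!?k) (?Bs!j) = 0"
  proof (intro allI impI)
    fix j assume j: "j < length ?Bs" "j \<noteq> ?k"
    define j' where "j' = (if j < ?k then j else ?k)"
    have j': "j' < length (Xs @ [S])" and eq: "?Bs!j = (Xs @ [S])!j'"
      using j by (auto simp: j'_def nth_append nth_Cons' less_Suc_eq)
    have "lie n ?Q ((Xs @ [S])!j') = 0" using orth j' by (simp add: lie_diff_left)
    thus "lie n (?Bs!?k) (?Bs!j) = 0" using eq by (simp add: nth_append)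
  qed
  have "gram_det n ?Bs = lie n (?Bs!?k) (?Bs!?k) * gram_det n (take ?k ?Bs @ drop (Suc ?k) ?Bs)"
    by (rule gram_ortho) (use oQ in auto)
  thus ?thesis using g by (simp add: nth_append)
qed



lemma det3': "det (mat (Suc (Suc (Suc 0))) (Suc (Suc (Suc 0))) f) = f(0,0)*(f(1,1)*f(2,2) - f(1,2)*f(2,1))
   - f(0,1)*(f(1,0)*f(2,2) - f(1,2)*f(2,0)) + f(0,2)*(f(1,0)*f(2,1)-f(1,1)*f(2,0))"
  using det3 by (simp add: numeral_3_eq_3)

lemma gram2: "gram_det n [A,B] = lie n A A * lie n B B - lie n A B * lie n A B"
  unfolding gram_det_def by (simp add: det2' lie_sym[of n B A])

lemma gram3: "gram_det n [A,B,C] =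
   lie n A A * (lie n B B * lie n C C - lie n B C * lie n B C)
 - lie n A B * (lie n A B * lie n C C - lie n B C * lie n A C)
 + lie n A C * (lie n A B * lie n B C - lie n B B * lie n A C)"
  unfolding gram_det_def by (simp add: det3' lie_sym[of n B A] lie_sym[of n C A] lie_sym[of n C B])

lemma lie_line_left: "lie n (\<lambda>i. X i + t * V i) W = lie n X W + t * lie n V W"
  by (simp only: lie_add_left lie_scale_left)
lemma lie_line_right: "lie n W (\<lambda>i. X i + t * V i) = lie n W X + t * lie n W V"
  by (metis lie_line_left lie_sym)
lemma lie_line_both: "lie n (\<lambda>i. X i + t * V i) (\<lambda>i. X i + t * V i) = lie n X X + 2 * t * lie n X V + t^2 * lie n V V"
  by (simp only: lie_line_left lie_line_right lie_sym[of n V X]) (simp add: power2_eq_square algebra_simps)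

lemma deriv_rat:
  assumes "(N has_real_derivative N') (at 0)" "(D has_real_derivative D') (at 0)"
    "D 0 \<noteq> 0" "K \<noteq> 0" "N' * D 0 = N 0 * D'"
  shows "((\<lambda>t. N t / (D t * K)) has_real_derivative 0) (at 0)"
proof -
  have dK: "((\<lambda>t. D t * K) has_real_derivative D' * K) (at 0)"
    using assms(2) by (auto intro!: derivative_eq_intros)
  have "((\<lambda>t. N t / (D t * K)) has_real_derivative (N' * (D 0 * K) - N 0 * (D' * K)) / (D 0 * K * (D 0 * K))) (at 0)"
    by (rule DERIV_divide[OF assms(1) dK]) (use assms in simp)
  moreover have "(N' * (D 0 * K) - N 0 * (D' * K)) = 0" using assms(5) by (simp add: algebra_simps)
  ultimately show ?thesis by (metis div_0)
qed

lemma crit_line: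
  fixes X V Y S :: "nat \<Rightarrow> real" and n :: nat
  defines "a \<equiv> lie n X X" and "b \<equiv> lie n X V" and "e \<equiv> lie n V V" and "p \<equiv> lie n X Y"
    and "q \<equiv> lie n V Y" and "u \<equiv> lie n X S" and "w \<equiv> lie n V S" and "yy \<equiv> lie n Y Y"
    and "c \<equiv> lie n Y S" and "s \<equiv> lie n S S"
  assumes D0: "a * s - u * u \<noteq> 0" and K: "yy * s - c * c \<noteq> 0"
    and cond: "(2*b*(yy*s - c*c) - (q*(p*s - c*u) + p*(q*s - c*w)) + (w*(p*c - yy*u) + u*(q*c - yy*w))) * (a * s - u * u)
       = (a * (yy * s - c * c) - p * (p * s - c * u) + u * (p * c - yy * u)) * (2*b*s - 2*u*w)"
  shows "((\<lambda>t. hfun n Y S (\<lambda>i. X i + t * V i)) has_real_derivative 0) (at 0)"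
proof -
  define N where "N = (\<lambda>t::real. (a + 2*t*b + t^2*e) * (yy * s - c * c)
     - (p + t*q) * ((p + t*q) * s - c * (u + t*w)) + (u + t*w) * ((p + t*q) * c - yy * (u + t*w)))"
  define D where "D = (\<lambda>t::real. (a + 2*t*b + t^2*e) * s - (u + t*w) * (u + t*w))"
  have eq: "(\<lambda>t. hfun n Y S (\<lambda>i. X i + t * V i)) = (\<lambda>t. N t / (D t * (yy * s - c * c)))"
    unfolding hfun_def gram2 gram3 N_def D_def a_def b_def e_def p_def q_def u_def w_def yy_def c_def s_def
    apply (rule ext)
    apply (simp only: lie_line_left lie_line_right lie_sym[of n S Y] lie_sym[of n Y V] lie_sym[of n Y X] lie_sym[of n S V] lie_sym[of n S X] lie_sym[of n V X])
    apply (simp add: power2_eq_square algebra_simps)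
    done
  have dN: "(N has_real_derivative (2*b*(yy*s - c*c) - (q*(p*s - c*u) + p*(q*s - c*w)) + (w*(p*c - yy*u) + u*(q*c - yy*w)))) (at 0)"
    unfolding N_def by (auto intro!: derivative_eq_intros simp: algebra_simps)
  have dD: "(D has_real_derivative (2*b*s - 2*u*w)) (at 0)"
    unfolding D_def by (auto intro!: derivative_eq_intros simp: algebra_simps)
  show ?thesis unfolding eq
    by (rule deriv_rat[OF dN dD]) (use D0 K cond in \<open>simp_all add: N_def D_def\<close>)
qed



lemma sum3:
  fixes x y z :: real
  assumes "3 \<le> m"
  shows "(\<Sum>j<m. (if j = 0 then x else if j = 1 then y else if j = 2 then z else 0) * f j) = x * f 0 + y * f 1 + z * f (2::nat)"
proof -
  have "(\<Sum>j<m. (if j = 0 then x else if j = 1 then y else if j = 2 then z else 0) * f j)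
      = (\<Sum>j<3. (if j = 0 then x else if j = 1 then y else if j = 2 then z else 0) * f j)"
    by (rule sum.mono_neutral_right) (use assms in auto)
  also have "\<dots> = x * f 0 + y * f 1 + z * f (2::nat)"
    by (simp add: numeral_3_eq_3 lessThan_Suc numeral_2_eq_2)
  finally show ?thesis .
qed

lemma proj_span:
  assumes "\<forall>j<length Ob. lie n P (Ob!j) = lie n Y (Ob!j)" "V \<in> span_set Ob"
  shows "lie n P V = lie n Y V"
proof -
  obtain d where "V = lin_comb d Ob" using assms(2) unfolding span_set_def by blast
  thus ?thesis using assms(1) by (simp add: lie_lc_right)
qed

theorem mainTheorem10:
  fixes n :: nat and Xs :: "(nat \<Rightarrow> real) list" and S Y :: "nat \<Rightarrow> real"
  assumes n: "n \<ge> 3"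
    and k: "2 \<le> length Xs" "length Xs \<le> n - 1"
    and Xvec: "\<forall>X\<in>set Xs. is_vec n X \<and> X \<noteq> (\<lambda>_. 0) \<and> lie n X X = 0"
    and Svec: "is_vec n S" and SS: "lie n S S \<le> 0"
    and indep: "lin_indep (Xs @ [S])"
    and Dneg: "gram_det n (Xs @ [S]) < 0"
    and Yvec: "is_vec n Y" "Y \<noteq> (\<lambda>_. 0)" "lie n Y Y = 0"
    and Ynot: "Y \<notin> span_set (Xs @ [S])"
    and YS: "lie n Y S \<noteq> 0"
    and pns: "\<not> (\<exists>c. lie_proj n (Xs @ [S]) Y = (\<lambda>i. c * S i))"
  shows "(let P = lie_proj n (Xs @ [S]) Y in
            P \<noteq> (\<lambda>_. 0) \<and> gram_det n [P, S] \<noteq> 0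
            \<and> hfun n Y S P = discr n Xs Y S
            \<and> critical_on (Xs @ [S]) (hfun n Y S) P)
       \<and> (lie n S S < 0 \<longrightarrow>
            (\<exists>X0. X0 \<in> span_set (Xs @ [S]) \<and> X0 \<noteq> (\<lambda>_. 0) \<and> lie n X0 S = 0
                  \<and> \<not> (\<exists>c. X0 = (\<lambda>i. c * S i)) \<and> lie n X0 Y = 0)
          \<and> (\<forall>X0. X0 \<in> span_set (Xs @ [S]) \<and> X0 \<noteq> (\<lambda>_. 0) \<and> lie n X0 S = 0
                  \<and> \<not> (\<exists>c. X0 = (\<lambda>i. c * S i)) \<and> lie n X0 Y = 0
                \<longrightarrow> gram_det n [X0, S] \<noteq> 0
                    \<and> critical_on (Xs @ [S]) (hfun n Y S) X0
                    \<and> hfun n Y S X0 = 1 / lie n S S))"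
proof -
  define Ob where "Ob = Xs @ [S]"
  define P where "P = lie_proj n Ob Y"
  let ?k = "length Xs"
  have lOb: "length Ob = Suc ?k" by (simp add: Ob_def)
  have neg: "gram_det n Ob < 0" using Dneg by (simp add: Ob_def)
  hence d: "gram_det n Ob \<noteq> 0" by simp
  note pp = proj_props[OF d, of Y, folded P_def]
  have Psp: "P \<in> span_set Ob" using pp by blast
  have PV: "\<And>V. V \<in> span_set Ob \<Longrightarrow> lie n P V = lie n Y V"
    using pp proj_span by blast
  have Ssp: "S \<in> span_set Ob" by (rule span_in') (simp add: Ob_def)
  have PS: "lie n P S = lie n Y S" by (rule PV[OF Ssp])
  have PP: "lie n P Y = lie n P P" using PV[OF Psp] lie_sym by metis
  define c where "c = lie n Y S"
  define s where "s = lie n S S"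
  have YY: "lie n Y Y = 0" using Yvec by simp
  have K: "gram_det n [Y, S] = - (c * c)" unfolding gram2 c_def using YY by simp
  have Kne: "gram_det n [Y, S] \<noteq> 0" using K YS c_def by simp
  have pns': "\<not> (\<exists>c. P = (\<lambda>i. c * S i))" using pns by (simp add: P_def Ob_def)
  have Pnz: "P \<noteq> (\<lambda>_. 0)"
  proof
    assume "P = (\<lambda>_. 0)"
    hence "P = (\<lambda>i. 0 * S i)" by simp
    thus False using pns' by blast
  qed
  have DP: "gram_det n [P, S] = lie n P P * s - c * c" unfolding gram2 s_def c_def PS ..
  have DPne: "gram_det n [P, S] \<noteq> 0"
  proof (cases "s = 0")
    case True thus ?thesis using DP YS c_def by simp
  next
    case False
    hence sneg: "s < 0" using SS s_def by simp
    show ?thesis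
    proof
      assume D0: "gram_det n [P, S] = 0"
      define W where "W = (\<lambda>i. P i - (c / s) * S i)"
      have Wsp: "W \<in> span_set Ob" unfolding W_def by (intro span_diff span_scale Psp Ssp)
      have WS: "lie n W S = 0" unfolding W_def using sneg
        by (simp only: lie_diff_left lie_scale_left PS) (simp add: c_def s_def)
      have SP: "lie n S P = c" using PS lie_sym c_def by metis
      have "lie n W W = lie n P P - 2 * (c / s) * c + (c / s)^2 * s"
        unfolding W_def
        apply (simp only: lie_diff_left lie_scale_left)
        apply (subst (1 2) lie_sym)
        apply (simp only: lie_diff_left lie_scale_left SP PS)
        apply (simp add: c_def s_def power2_eq_square algebra_simps)
        done
      also have "\<dots> = 0" using D0 DP sneg by (simp add: field_simps power2_eq_square)
      finally have "lie n W W \<le> 0" by simp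
      hence "W = (\<lambda>_. 0)" using Llemma[OF Ob_def neg _ Wsp WS] sneg s_def by simp
      hence "P = (\<lambda>i. (c / s) * S i)" unfolding W_def by (metis eq_iff_diff_eq_0)
      thus False using pns' by blast
    qed
  qed
  have part1: "hfun n Y S P = discr n Xs Y S"
  proof -
    have sch: "gram_det n (Xs @ [Y, S]) = lie n (\<lambda>i. Y i - P i) (\<lambda>i. Y i - P i) * gram_det n Ob"
      using schur[of P Xs S n Y] Psp pp by (simp add: Ob_def)
    have QQ: "lie n (\<lambda>i. Y i - P i) (\<lambda>i. Y i - P i) = - lie n P P"
      apply (simp only: lie_diff_left)
      apply (subst (1 2) lie_sym)
      apply (simp only: lie_diff_left YY PP lie_sym[of n P Y])
      using PP lie_sym[of n P Y] apply simp
      done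
    have N: "gram_det n [P, Y, S] = - lie n P P * gram_det n [P, S]"
      unfolding gram3 DP PP PS YY using PP by (simp add: c_def s_def algebra_simps)
    have "discr n Xs Y S = - lie n P P / gram_det n [Y, S]"
      unfolding discr_def using sch QQ d by (simp add: Ob_def)
    moreover have "hfun n Y S P = - lie n P P / gram_det n [Y, S]"
      unfolding hfun_def N using DPne by simp
    ultimately show ?thesis by simp
  qed
  have crit1: "critical_on Ob (hfun n Y S) P"
    unfolding critical_on_def
  proof
    fix V assume V: "V \<in> span_set Ob"
    have bq: "lie n P V = lie n V Y" using PV[OF V] lie_sym by metis
    show "((\<lambda>t. hfun n Y S (\<lambda>i. P i + t * V i)) has_real_derivative 0) (at 0)"
    proof (rule crit_line)
      show "lie n P P * lie n S S - lie n P S * lie n P S \<noteq> 0" using DPne DP by (simp add: s_def c_def PS)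
      show "lie n Y Y * lie n S S - lie n Y S * lie n Y S \<noteq> 0" using YS YY by simp
      show "(2 * lie n P V * (lie n Y Y * lie n S S - lie n Y S * lie n Y S) -
     (lie n V Y * (lie n P Y * lie n S S - lie n Y S * lie n P S) +
      lie n P Y * (lie n V Y * lie n S S - lie n Y S * lie n V S)) +
     (lie n V S * (lie n P Y * lie n Y S - lie n Y Y * lie n P S) +
      lie n P S * (lie n V Y * lie n Y S - lie n Y Y * lie n V S))) *
    (lie n P P * lie n S S - lie n P S * lie n P S) =
    (lie n P P * (lie n Y Y * lie n S S - lie n Y S * lie n Y S) -
     lie n P Y * (lie n P Y * lie n S S - lie n Y S * lie n P S) +
     lie n P S * (lie n P Y * lie n Y S - lie n Y Y * lie n P S)) *
    (2 * lie n P V * lie n S S - 2 * lie n P S * lie n V S)"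
        unfolding bq PP PS YY by (simp add: algebra_simps)
    qed
  qed
  have part2: "lie n S S < 0 \<longrightarrow>
            (\<exists>X0. X0 \<in> span_set (Xs @ [S]) \<and> X0 \<noteq> (\<lambda>_. 0) \<and> lie n X0 S = 0
                  \<and> \<not> (\<exists>c. X0 = (\<lambda>i. c * S i)) \<and> lie n X0 Y = 0)
          \<and> (\<forall>X0. X0 \<in> span_set (Xs @ [S]) \<and> X0 \<noteq> (\<lambda>_. 0) \<and> lie n X0 S = 0
                  \<and> \<not> (\<exists>c. X0 = (\<lambda>i. c * S i)) \<and> lie n X0 Y = 0
                \<longrightarrow> gram_det n [X0, S] \<noteq> 0
                    \<and> critical_on (Xs @ [S]) (hfun n Y S) X0
                    \<and> hfun n Y S X0 = 1 / lie n S S)"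
  proof
    assume sneg: "lie n S S < 0"
    have ex: "\<exists>X0. X0 \<in> span_set Ob \<and> X0 \<noteq> (\<lambda>_. 0) \<and> lie n X0 S = 0
                  \<and> \<not> (\<exists>c. X0 = (\<lambda>i. c * S i)) \<and> lie n X0 Y = 0"
    proof -
      obtain x y z :: real where nz: "\<not>(x = 0 \<and> y = 0 \<and> z = 0)"
        and e1: "lie n (Ob!0) S * x + lie n (Ob!1) S * y + lie n (Ob!2) S * z = 0"
        and e2: "lie n (Ob!0) Y * x + lie n (Ob!1) Y * y + lie n (Ob!2) Y * z = 0"
        using three_two by blast
      define cf where "cf = (\<lambda>j::nat. if j = 0 then x else if j = 1 then y else if j = 2 then z else 0)"
      define X0 where "X0 = lin_comb cf Ob"
      have m3: "3 \<le> length Ob" using lOb k by simp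
      have X0sp: "X0 \<in> span_set Ob" unfolding X0_def span_set_def by blast
      have XS: "lie n X0 S = 0" unfolding X0_def lie_lc_left cf_def sum3[OF m3] using e1 by (simp add: algebra_simps)
      have XY: "lie n X0 Y = 0" unfolding X0_def lie_lc_left cf_def sum3[OF m3] using e2 by (simp add: algebra_simps)
      have Xnz: "X0 \<noteq> (\<lambda>_. 0)"
      proof
        assume "X0 = (\<lambda>_. 0)"
        hence "\<forall>j<length Ob. cf j = 0" using indep unfolding lin_indep_def X0_def Ob_def by blast
        moreover have "0 < length Ob" "1 < length Ob" "2 < length Ob" using m3 by linarith+
        ultimately have "cf 0 = 0" "cf 1 = 0" "cf 2 = 0" by blast+
        thus False using nz unfolding cf_def by simp
      qed
      have Xns: "\<not> (\<exists>c. X0 = (\<lambda>i. c * S i))"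
      proof
        assume "\<exists>c. X0 = (\<lambda>i. c * S i)"
        then obtain c' where c': "X0 = (\<lambda>i. c' * S i)" by blast
        hence "lie n X0 S = c' * lie n S S" by (simp add: lie_scale_left)
        hence "c' = 0" using XS sneg by simp
        thus False using c' Xnz by simp
      qed
      show ?thesis using X0sp Xnz XS Xns XY by blast
    qed
    have all: "\<forall>X0. X0 \<in> span_set Ob \<and> X0 \<noteq> (\<lambda>_. 0) \<and> lie n X0 S = 0
                  \<and> \<not> (\<exists>c. X0 = (\<lambda>i. c * S i)) \<and> lie n X0 Y = 0
                \<longrightarrow> gram_det n [X0, S] \<noteq> 0
                    \<and> critical_on Ob (hfun n Y S) X0
                    \<and> hfun n Y S X0 = 1 / lie n S S"
    proof (intro allI impI, elim conjE)
      fix X0 assume X0sp: "X0 \<in> span_set Ob" and Xnz: "X0 \<noteq> (\<lambda>_. 0)" and XS: "lie n X0 S = 0"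
        and XY: "lie n X0 Y = 0"
      have apos: "lie n X0 X0 > 0"
      proof (rule ccontr)
        assume "\<not> lie n X0 X0 > 0"
        hence "X0 = (\<lambda>_. 0)" using Llemma[OF Ob_def neg sneg X0sp XS] by simp
        thus False using Xnz by simp
      qed
      have DX: "gram_det n [X0, S] = lie n X0 X0 * lie n S S" unfolding gram2 XS by simp
      have DXne: "gram_det n [X0, S] \<noteq> 0" using DX apos sneg by simp
      have NX: "gram_det n [X0, Y, S] = - lie n X0 X0 * (c * c)" unfolding gram3 XS XY YY c_def by simp
      have hX: "hfun n Y S X0 = 1 / lie n S S"
        unfolding hfun_def NX DX K using apos sneg YS c_def by (simp add: field_simps)
      have crit: "critical_on Ob (hfun n Y S) X0"
        unfolding critical_on_def
      proof
        fix V assume V: "V \<in> span_set Ob"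
        show "((\<lambda>t. hfun n Y S (\<lambda>i. X0 i + t * V i)) has_real_derivative 0) (at 0)"
        proof (rule crit_line)
          show "lie n X0 X0 * lie n S S - lie n X0 S * lie n X0 S \<noteq> 0" using DXne DX XS by simp
          show "lie n Y Y * lie n S S - lie n Y S * lie n Y S \<noteq> 0" using YS YY by simp
          show "(2 * lie n X0 V * (lie n Y Y * lie n S S - lie n Y S * lie n Y S) -
     (lie n V Y * (lie n X0 Y * lie n S S - lie n Y S * lie n X0 S) +
      lie n X0 Y * (lie n V Y * lie n S S - lie n Y S * lie n V S)) +
     (lie n V S * (lie n X0 Y * lie n Y S - lie n Y Y * lie n X0 S) +
      lie n X0 S * (lie n V Y * lie n Y S - lie n Y Y * lie n V S))) *
    (lie n X0 X0 * lie n S S - lie n X0 S * lie n X0 S) =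
    (lie n X0 X0 * (lie n Y Y * lie n S S - lie n Y S * lie n Y S) -
     lie n X0 Y * (lie n X0 Y * lie n S S - lie n Y S * lie n X0 S) +
     lie n X0 S * (lie n X0 Y * lie n Y S - lie n Y Y * lie n X0 S)) *
    (2 * lie n X0 V * lie n S S - 2 * lie n X0 S * lie n V S)"
            unfolding XS XY YY by (simp add: algebra_simps)
        qed
      qed
      show "gram_det n [X0, S] \<noteq> 0 \<and> critical_on Ob (hfun n Y S) X0 \<and> hfun n Y S X0 = 1 / lie n S S"
        using DXne crit hX by blast
    qed
    show "(\<exists>X0. X0 \<in> span_set (Xs @ [S]) \<and> X0 \<noteq> (\<lambda>_. 0) \<and> lie n X0 S = 0
                  \<and> \<not> (\<exists>c. X0 = (\<lambda>i. c * S i)) \<and> lie n X0 Y = 0)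
          \<and> (\<forall>X0. X0 \<in> span_set (Xs @ [S]) \<and> X0 \<noteq> (\<lambda>_. 0) \<and> lie n X0 S = 0
                  \<and> \<not> (\<exists>c. X0 = (\<lambda>i. c * S i)) \<and> lie n X0 Y = 0
                \<longrightarrow> gram_det n [X0, S] \<noteq> 0
                    \<and> critical_on (Xs @ [S]) (hfun n Y S) X0
                    \<and> hfun n Y S X0 = 1 / lie n S S)"
      using ex all unfolding Ob_def by blast
  qed
  show ?thesis
    unfolding Let_def P_def[symmetric, unfolded Ob_def] 
    using Pnz DPne part1 crit1 part2 unfolding Ob_def P_def by blast
qed

end
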